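(* Assume $\sigma<2\phi(0)$. Then there exists a unique $\delta^\ast\in(\delta_{\mathrm{th}},b)$ with $$\frac{\sigma}{\phi\left(\Phi^{-1}(q(\delta^\ast))\right)}\cdot\frac{e^b-e^{b-\delta^\ast}}{e^b-1}=1,$$ and $\delta^\ast$ is the unique maximizer of $G_\varphi(\delta)=\varphi(\delta)(e^\delta-1)$ over $[\delta_{\mathrm{th}},b)$. Consequently, if $\delta_{\mathrm{th}}<\delta_\beta<\delta^\ast$, then $\delta^\ast$ is the unique maximizer of the governance objective $G$ over $(0,b)$.
   Context: Parameters: $N>0$, $\sigma>0$, $b>0$, $\beta>0$. $\Phi$ and $\phi$ denote the standard normal cdf and pdf. For $\delta\in(0,b)$ let $q(\delta)=\frac{e^{b-\delta}-1}{e^b-1}\in(0,1)$ and $\varphi(\delta)=N\exp\!\left[\sigma\,\Phi^{-1}(q(\delta))-\delta-\frac{\sigma^2}{2}\right]$. Let $\delta_{\mathrm{th}}=b-\log\left(\frac{e^b+1}{2}\right)$. Let $\delta_\beta\in(0,b)$ be the unique point with $\varphi(\delta_\beta)=\beta N$ ($\varphi$ is strictly decreasing from $+\infty$ to $0$ on $(0,b)$). Let $F^\ast(\delta)=\min(\varphi(\delta),\beta N)$ and the governance objective $G(\delta)=F^\ast(\delta)(e^\delta-1)$. *)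

theory Defs
  imports "HOL-Probability.Probability"
begin

abbreviation phi_n :: "real \<Rightarrow> real" where
  "phi_n \<equiv> std_normal_density"

definition Phi_n :: "real \<Rightarrow> real" where
  "Phi_n x = (LBINT t:{..x}. std_normal_density t)"

definition Phi_inv :: "real \<Rightarrow> real" where
  "Phi_inv p = (THE y. Phi_n y = p)"

definition qfun :: "real \<Rightarrow> real \<Rightarrow> real" where
  "qfun b \<delta> = (exp (b - \<delta>) - 1) / (exp b - 1)"

definition varphi :: "real \<Rightarrow> real \<Rightarrow> real \<Rightarrow> real \<Rightarrow> real" where
  "varphi N \<sigma> b \<delta> = N * exp (\<sigma> * Phi_inv (qfun b \<delta>) - \<delta> - \<sigma>\<^sup>2 / 2)"

definition delta_th :: "real \<Rightarrow> real" where
  "delta_th b = b - ln ((exp b + 1) / 2)"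

definition Fstar :: "real \<Rightarrow> real \<Rightarrow> real \<Rightarrow> real \<Rightarrow> real \<Rightarrow> real" where
  "Fstar N \<sigma> b \<beta> \<delta> = min (varphi N \<sigma> b \<delta>) (\<beta> * N)"

definition Gobj :: "real \<Rightarrow> real \<Rightarrow> real \<Rightarrow> real \<Rightarrow> real \<Rightarrow> real" where
  "Gobj N \<sigma> b \<beta> \<delta> = Fstar N \<sigma> b \<beta> \<delta> * (exp \<delta> - 1)"

definition Gvarphi :: "real \<Rightarrow> real \<Rightarrow> real \<Rightarrow> real \<Rightarrow> real" where
  "Gvarphi N \<sigma> b \<delta> = varphi N \<sigma> b \<delta> * (exp \<delta> - 1)"

definition unique_maximizer_on :: "(real \<Rightarrow> real) \<Rightarrow> real set \<Rightarrow> real \<Rightarrow> bool" where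
  "unique_maximizer_on f S x \<longleftrightarrow> x \<in> S \<and> (\<forall>y\<in>S. y \<noteq> x \<longrightarrow> f y < f x)"

end

theory Submission imports Defs
begin

lemma phi_si: "A \<in> sets borel \<Longrightarrow> set_integrable lborel A phi_n"
  unfolding set_integrable_def
  by (rule integrable_mult_indicator) auto

lemma phi_pos: "phi_n x > 0"
  by (simp add: normal_density_pos)

lemma Phi_split:
  assumes "a \<le> x"
  shows "Phi_n x = Phi_n a + (LBINT y=a..x. phi_n y)"
proof -
  have "{..x} = {..a} \<union> {a<..x}" using assms by auto
  hence "Phi_n x = (LBINT t:{..a} \<union> {a<..x}. phi_n t)" by (simp add: Phi_n_def)
  also have "\<dots> = Phi_n a + (LBINT t:{a<..x}. phi_n t)"
    by (subst set_integral_Un) (auto simp: Phi_n_def intro!: phi_si)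
  also have "(LBINT t:{a<..x}. phi_n t) = (LBINT y=a..x. phi_n y)"
    using assms by (simp add: interval_integral_Ioc)
  finally show ?thesis .
qed

lemma cont_phi: "continuous_on S phi_n"
  unfolding std_normal_density_def by (intro continuous_intros) auto

lemma Phi_deriv: "(Phi_n has_real_derivative phi_n x) (at x)"
proof -
  have "((\<lambda>u. LBINT y=(x-1)..u. phi_n y) has_vector_derivative phi_n x) (at x within {x-1..x+1})"
    by (rule interval_integral_FTC2) (auto intro: cont_phi)
  hence 1: "((\<lambda>u. LBINT y=(x-1)..u. phi_n y) has_real_derivative phi_n x) (at x within {x-1..x+1})"
    by (simp only: has_real_derivative_iff_has_vector_derivative)
  have 2: "((\<lambda>u. Phi_n (x-1) + (LBINT y=(x-1)..u. phi_n y)) has_real_derivative 0 + phi_n x) (at x within {x-1..x+1})"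
    by (rule DERIV_add[OF DERIV_const 1])
  have 3: "((\<lambda>u. Phi_n (x-1) + (LBINT y=(x-1)..u. phi_n y)) has_real_derivative phi_n x) (at x within {x-1<..<x+1})"
    by (rule DERIV_subset[OF 2[simplified]]) auto
  have "at x within {x-1<..<x+1} = at x"
    by (rule at_within_open) auto
  with 3 have d: "((\<lambda>u. Phi_n (x-1) + (LBINT y=(x-1)..u. phi_n y)) has_real_derivative phi_n x) (at x)"
    by simp
  show ?thesis
  proof (rule has_field_derivative_transform_within_open[OF d, of "{x-1<..<x+1}"])
    fix y assume "y \<in> {x-1<..<x+1}"
    hence "x - 1 \<le> y" by simp
    from Phi_split[OF this] show "Phi_n (x-1) + (LBINT y=(x-1)..y. phi_n y) = Phi_n y" by simp
  qed auto
qed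

lemma Phi_cont: "isCont Phi_n x"
  using Phi_deriv DERIV_isCont by blast

lemma Phi_strict: assumes "a < b" shows "Phi_n a < Phi_n b"
proof (rule DERIV_pos_imp_increasing[OF assms])
  fix x show "\<exists>y. DERIV Phi_n x :> y \<and> y > 0" using Phi_deriv[of x] phi_pos[of x] by blast
qed

lemma Phi_le_iff: "Phi_n a \<le> Phi_n b \<longleftrightarrow> a \<le> b"
  using Phi_strict[of a b] Phi_strict[of b a] by (cases a b rule: linorder_cases) auto

lemma Phi_inj: "Phi_n a = Phi_n b \<Longrightarrow> a = b"
  using Phi_strict[of a b] Phi_strict[of b a] by (cases a b rule: linorder_cases) auto

lemma Phi_inv_Phi: "Phi_inv (Phi_n u) = u"
  unfolding Phi_inv_def by (rule the_equality) (auto dest: Phi_inj)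

definition "NM = density lborel phi_n"

lemma NM_rd: "real_distribution NM"
  unfolding real_distribution_def real_distribution_axioms_def NM_def
  using prob_space_normal_density by auto

lemma NM_measure: "A \<in> sets borel \<Longrightarrow> measure NM A = (LBINT t:A. phi_n t)"
proof -
  assume A: "A \<in> sets borel"
  have "measure NM A = integral\<^sup>L NM (indicator A)"
    using A by (simp add: NM_def)
  also have "\<dots> = integral\<^sup>L lborel (\<lambda>t. phi_n t *\<^sub>R indicator A t)"
    unfolding NM_def using A by (subst integral_density) auto
  also have "\<dots> = (LBINT t:A. phi_n t)"
    unfolding set_lebesgue_integral_def by (simp add: mult.commute)
  finally show ?thesis .
qed

lemma Phi_cdf: "Phi_n = cdf NM"
  by (auto simp: fun_eq_iff cdf_def Phi_n_def NM_measure)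

lemma Phi_bot: "(Phi_n \<longlongrightarrow> 0) at_bot"
  unfolding Phi_cdf
  using finite_borel_measure.cdf_lim_at_bot[OF real_distribution.finite_borel_measure_M[OF NM_rd]] by simp

lemma Phi_nonneg: "Phi_n x \<ge> 0"
  unfolding Phi_cdf by (simp add: cdf_def)

lemma Phi_pos: "Phi_n x > 0"
  using Phi_strict[of "x-1" x] Phi_nonneg[of "x-1"] by simp


lemma Phi_0: "Phi_n 0 = 1/2"
proof -
  interpret rd: real_distribution NM by (rule NM_rd)
  have fb: "finite_borel_measure NM" by (rule rd.finite_borel_measure_M)
  have sp: "space NM = UNIV" by (simp add: NM_def)
  have e: "(\<lambda>t. phi_n (-t)) = phi_n" by (simp add: fun_eq_iff std_normal_density_def)
  have s: "{x. -x \<in> {..(0::real)}} = {0..}" by auto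
  have "Phi_n 0 = (LBINT t:{0..}. phi_n t)"
    unfolding Phi_n_def by (subst set_integral_reflect) (simp only: e s)
  also have "\<dots> = measure NM {0..}" by (simp add: NM_measure)
  also have "{0..} = {0} \<union> {(0::real)<..}" by auto
  also have "measure NM \<dots> = measure NM {0} + measure NM {0<..}"
    by (rule rd.finite_measure_Union) auto
  also have "measure NM {0} = 0"
    using finite_borel_measure.isCont_cdf[OF fb, of 0] Phi_cont[of 0] by (simp add: Phi_cdf)
  also have "{0<..} = space NM - {..(0::real)}" by (auto simp: sp)
  also have "measure NM \<dots> = 1 - measure NM {..0}"
    by (rule rd.prob_compl) auto
  also have "measure NM {..0} = Phi_n 0" by (simp add: Phi_cdf cdf_def)
  finally show ?thesis by simp
qed

lemma Phi_surj:
  assumes "0 < p" "p \<le> 1/2"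
  shows "\<exists>u\<le>0. Phi_n u = p"
proof -
  have "eventually (\<lambda>x. Phi_n x < p) at_bot"
    using order_tendstoD(2)[OF Phi_bot assms(1)] .
  then obtain M where M: "\<And>x. x \<le> M \<Longrightarrow> Phi_n x < p"
    by (auto simp: eventually_at_bot_linorder)
  define a where "a = min M 0"
  have "Phi_n a \<le> p" using M[of a] by (simp add: a_def)
  moreover have "p \<le> Phi_n 0" using assms Phi_0 by simp
  moreover have "a \<le> 0" by (simp add: a_def)
  ultimately obtain u where "a \<le> u" "u \<le> 0" "Phi_n u = p"
    using IVT[of Phi_n a p 0] Phi_cont by blast
  thus ?thesis by blast
qed

lemma Phi_Phi_inv: "0 < p \<Longrightarrow> p \<le> 1/2 \<Longrightarrow> Phi_n (Phi_inv p) = p \<and> Phi_inv p \<le> 0"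
  using Phi_surj[of p] Phi_inv_Phi by metis

lemma phi_small:
  assumes "c > 0"
  shows "\<exists>u\<le>0. phi_n u < c"
proof -
  define u where "u = - sqrt (2 * \<bar>ln c\<bar>) - 1"
  have sq0: "sqrt (2 * \<bar>ln c\<bar>) \<ge> 0" by simp
  have u0: "u \<le> 0" unfolding u_def using sq0 by linarith
  have "sqrt (2 * \<bar>ln c\<bar>) ^ 2 = 2 * \<bar>ln c\<bar>" by simp
  have "u^2 = (sqrt (2 * \<bar>ln c\<bar>) + 1)^2" by (simp add: u_def power2_eq_square algebra_simps)
  also have "\<dots> > sqrt (2 * \<bar>ln c\<bar>) ^ 2"
  proof (rule power_strict_mono)
    show "0 \<le> sqrt (2 * \<bar>ln c\<bar>)" by simp
  qed simp_all
  also have "sqrt (2 * \<bar>ln c\<bar>) ^ 2 = 2 * \<bar>ln c\<bar>" by simp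
  finally have "-(u^2)/2 < ln c" by linarith
  hence "exp (-(u^2)/2) < c" using assms by (metis exp_less_cancel_iff exp_ln)
  moreover have "phi_n u \<le> exp (-(u^2)/2)"
  proof -
    have "sqrt (2*pi) \<ge> 1" using pi_gt3 by (simp add: real_le_rsqrt)
    thus ?thesis unfolding std_normal_density_def
      by (simp add: divide_le_eq mult_le_cancel_right1 )
  qed
  ultimately show ?thesis using u0 by force
qed


lemma phi_deriv: "(phi_n has_real_derivative (- x * phi_n x)) (at x)"
proof -
  have a: "((\<lambda>x. x^2) has_real_derivative 2*x) (at x)" using DERIV_pow[of 2 x] by simp
  have b: "((\<lambda>x. -(x^2)/2) has_real_derivative -(2*x)/2) (at x)"
    using DERIV_cdivide[OF DERIV_minus[OF a], of 2] by simp
  have c: "((\<lambda>x. exp (-(x^2)/2)) has_real_derivative exp (-(x^2)/2) * (-(2*x)/2)) (at x)"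
    by (rule DERIV_fun_exp[OF b])
  from DERIV_cmult[OF c, of "1 / sqrt (2 * pi)"] show ?thesis
    unfolding std_normal_density_def by (simp add: algebra_simps)
qed

definition rr :: "real \<Rightarrow> real \<Rightarrow> real" where "rr s u = s*(1 - Phi_n u) - phi_n u"
definition ff :: "real \<Rightarrow> real \<Rightarrow> real" where "ff s u = exp (s*u)*(1 - Phi_n u)"

lemma rr_deriv: "(rr s has_real_derivative (x - s) * phi_n x) (at x)"
proof -
  have "((\<lambda>u. s*(1 - Phi_n u) - phi_n u) has_real_derivative s*(0 - phi_n x) - (- x * phi_n x)) (at x)"
    by (intro DERIV_diff DERIV_cmult DERIV_const Phi_deriv phi_deriv)
  thus ?thesis unfolding rr_def[abs_def] by (simp add: algebra_simps)
qed

lemma ff_deriv: "(ff s has_real_derivative exp (s*x) * rr s x) (at x)"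
proof -
  have e: "((\<lambda>u. exp (s*u)) has_real_derivative exp (s*x) * (s * 1)) (at x)"
    by (intro DERIV_fun_exp DERIV_cmult DERIV_ident)
  have p: "((\<lambda>u. 1 - Phi_n u) has_real_derivative 0 - phi_n x) (at x)"
    by (rule DERIV_diff[OF DERIV_const Phi_deriv])
  from DERIV_mult[OF e p] show ?thesis unfolding ff_def[abs_def] rr_def by (simp add: algebra_simps)
qed

lemma rr_cont: "isCont (rr s) x" using rr_deriv DERIV_isCont by blast
lemma ff_cont: "continuous_on S (ff s)"
  using ff_deriv by (meson DERIV_isCont continuous_at_imp_continuous_on)

lemma rr_strict:
  assumes "0 < s" "a < b" "b \<le> 0"
  shows "rr s b < rr s a"
proof (rule DERIV_neg_imp_decreasing[OF assms(2)])
  fix x assume "a \<le> x" "x \<le> b"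
  hence "(x - s) * phi_n x < 0" using assms phi_pos[of x] by (simp add: mult_neg_pos)
  thus "\<exists>y. DERIV (rr s) x :> y \<and> y < 0" using rr_deriv by blast
qed

lemma u_main:
  assumes s0: "0 < s" and s1: "s < 2 * phi_n 0"
  shows "\<exists>us<0. rr s us = 0 \<and> (\<forall>u\<le>0. rr s u = 0 \<longrightarrow> u = us)
            \<and> (\<forall>u\<le>0. u \<noteq> us \<longrightarrow> ff s u < ff s us)"
proof -
  obtain u0 where u0: "u0 \<le> 0" "phi_n u0 < s/2" using phi_small[of "s/2"] s0 by auto
  have "Phi_n u0 \<le> 1/2" using Phi_le_iff[of u0 0] u0 Phi_0 by simp
  hence "s*(1 - Phi_n u0) \<ge> s*(1/2)" using s0 by (intro mult_left_mono) auto
  hence r0: "rr s u0 > 0" using u0 unfolding rr_def by linarith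
  have r1: "rr s 0 < 0" using s1 unfolding rr_def Phi_0 by simp
  have "u0 \<noteq> 0" using r0 r1 by auto
  with u0 have u0': "u0 < 0" by simp
  obtain us where us: "u0 \<le> us" "us \<le> 0" "rr s us = 0"
    using IVT2[of "rr s" 0 0 u0] r0 r1 u0' rr_cont by force
  have us0: "us < 0" using us r1 by (cases "us = 0") auto
  have pos: "rr s u > 0" if "u < us" for u
    using rr_strict[OF s0 that] us us0 by simp
  have neg: "rr s u < 0" if "us < u" "u \<le> 0" for u
    using rr_strict[OF s0 that] us by simp
  have uniq: "\<forall>u\<le>0. rr s u = 0 \<longrightarrow> u = us"
    using pos neg by (metis linorder_neqE_linordered_idom less_irrefl)
  have inc: "ff s a < ff s us" if "a < us" for a
  proof (rule DERIV_pos_imp_increasing_open[OF that])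
    fix x assume "a < x" "x < us"
    hence "exp (s*x) * rr s x > 0" using pos by simp
    thus "\<exists>y. DERIV (ff s) x :> y \<and> y > 0" using ff_deriv by blast
  qed (rule ff_cont)
  have dec: "ff s b < ff s us" if "us < b" "b \<le> 0" for b
  proof (rule DERIV_neg_imp_decreasing_open[OF that(1)])
    fix x assume "us < x" "x < b"
    hence "exp (s*x) * rr s x < 0" using neg that by (simp add: mult_pos_neg)
    thus "\<exists>y. DERIV (ff s) x :> y \<and> y < 0" using ff_deriv by blast
  qed (rule ff_cont)
  have "\<forall>u\<le>0. u \<noteq> us \<longrightarrow> ff s u < ff s us"
    using inc dec by (metis linorder_neqE_linordered_idom)
  with us0 us uniq show ?thesis by blast
qed


lemma eb: "(b::real) > 0 \<Longrightarrow> exp b > 1" using exp_less_cancel_iff[of 0 b] by simp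

lemma q_pos_iff: "b > 0 \<Longrightarrow> 0 < qfun b d \<longleftrightarrow> d < b"
  unfolding qfun_def using eb[of b] by (simp add: divide_pos_pos zero_less_divide_iff)

lemma q_half_iff:
  assumes "b > 0"
  shows "qfun b d < 1/2 \<longleftrightarrow> delta_th b < d" "qfun b d \<le> 1/2 \<longleftrightarrow> delta_th b \<le> d"
proof -
  define L where "L = ln ((exp b + 1) / 2)"
  have eL: "exp L = (exp b + 1)/2" unfolding L_def by (simp add: add_pos_pos)
  have e1: "exp b - 1 > 0" using eb[OF assms] by simp
  have "qfun b d < 1/2 \<longleftrightarrow> exp (b - d) < exp L"
    unfolding qfun_def eL using e1 by (simp add: divide_less_eq field_simps)
  also have "\<dots> \<longleftrightarrow> delta_th b < d" unfolding delta_th_def L_def[symmetric] by (simp; arith)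
  finally show "qfun b d < 1/2 \<longleftrightarrow> delta_th b < d" .
  have "qfun b d \<le> 1/2 \<longleftrightarrow> exp (b - d) \<le> exp L"
    unfolding qfun_def eL using e1 by (simp add: divide_le_eq field_simps)
  also have "\<dots> \<longleftrightarrow> delta_th b \<le> d" unfolding delta_th_def L_def[symmetric] by (simp; arith)
  finally show "qfun b d \<le> 1/2 \<longleftrightarrow> delta_th b \<le> d" .
qed

lemma q_mono: "b > 0 \<Longrightarrow> d1 < d2 \<Longrightarrow> qfun b d2 < qfun b d1"
  unfolding qfun_def using eb[of b] by (simp add: divide_strict_right_mono)

lemma q_inj: "b > 0 \<Longrightarrow> qfun b d1 = qfun b d2 \<Longrightarrow> d1 = d2"
  using q_mono[of b d1 d2] q_mono[of b d2 d1] by (cases d1 d2 rule: linorder_cases) auto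

lemma one_minus_q: "b > 0 \<Longrightarrow> (exp b - exp (b - d)) / (exp b - 1) = 1 - qfun b d"
  unfolding qfun_def using eb[of b] by (simp add: field_simps)

lemma Gvarphi_eq:
  assumes "b > 0" "Phi_n u = qfun b d"
  shows "Gvarphi N s b d = N * exp (-(s^2)/2) * (1 - exp (-b)) * (exp (s*u) * (1 - qfun b d))"
proof -
  define E where "E = exp b"
  define X where "X = exp (b - d)"
  have E1: "E > 1" unfolding E_def using assms by simp
  have X0: "X > 0" unfolding X_def by simp
  have ed: "exp d = E / X" unfolding E_def X_def by (simp add: exp_diff)
  have emd: "exp (-b) = 1 / E" unfolding E_def by (simp add: exp_minus field_simps)
  have "s*u - d - s^2/2 = s*u + (-(s^2)/2) + ((b-d) + -b)" by simp
  hence "exp (s*u - d - s^2/2) = exp (s*u + (-(s^2)/2) + ((b-d) + -b))" by (rule arg_cong)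
  also have "\<dots> = exp (s*u) * exp (-(s^2)/2) * (exp (b-d) * exp (-b))" by (simp only: exp_add)
  finally have ex: "exp (s * u - d - s^2/2) = exp (s*u) * exp (-(s^2)/2) * (X / E)"
    unfolding X_def emd by simp
  have q: "qfun b d = (X - 1)/(E - 1)" unfolding qfun_def E_def X_def by simp
  have pu: "Phi_inv (qfun b d) = u" using assms(2) Phi_inv_Phi by metis
  show ?thesis
    unfolding Gvarphi_def varphi_def pu unfolding ex ed emd q using E1 X0
    by (simp add: field_simps)
qed

lemma eq_iff:
  assumes "Phi_n u = p"
  shows "s / phi_n u * (1 - p) = 1 \<longleftrightarrow> rr s u = 0"
  using phi_pos[of u] assms unfolding rr_def by (auto simp: field_simps)


theorem proposition3:
  fixes N \<sigma> b \<beta> \<delta>\<^sub>\<beta> :: real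
  assumes "N > 0" and "\<sigma> > 0" and "b > 0" and "\<beta> > 0"
    and "\<delta>\<^sub>\<beta> \<in> {0<..<b}" and "varphi N \<sigma> b \<delta>\<^sub>\<beta> = \<beta> * N"
    and "\<sigma> < 2 * phi_n 0"
  shows "\<exists>d. d \<in> {delta_th b<..<b}
      \<and> \<sigma> / phi_n (Phi_inv (qfun b d)) * ((exp b - exp (b - d)) / (exp b - 1)) = 1
      \<and> (\<forall>d'. d' \<in> {delta_th b<..<b}
            \<and> \<sigma> / phi_n (Phi_inv (qfun b d')) * ((exp b - exp (b - d')) / (exp b - 1)) = 1
            \<longrightarrow> d' = d)
      \<and> unique_maximizer_on (Gvarphi N \<sigma> b) {delta_th b..<b} d
      \<and> (delta_th b < \<delta>\<^sub>\<beta> \<and> \<delta>\<^sub>\<beta> < d \<longrightarrow> unique_maximizer_on (Gobj N \<sigma> b \<beta>) {0<..<b} d)"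
proof -
  note N0 = assms(1) and s0 = assms(2) and b0 = assms(3) and be0 = assms(4)
  obtain us where us0: "us < 0" and rus: "rr \<sigma> us = 0"
    and runiq: "\<forall>u\<le>0. rr \<sigma> u = 0 \<longrightarrow> u = us"
    and fmax: "\<forall>u\<le>0. u \<noteq> us \<longrightarrow> ff \<sigma> u < ff \<sigma> us"
    using u_main[OF s0 assms(7)] by blast
  define C where "C = N * exp (-(\<sigma>^2)/2) * (1 - exp (-b))"
  have "exp (-b) < 1" using b0 by simp
  hence C0: "C > 0" unfolding C_def using N0 by (intro mult_pos_pos) auto
  define ds where "ds = b - ln (1 + Phi_n us * (exp b - 1))"
  have e1: "exp b - 1 > 0" using eb[OF b0] by simp
  have pos1: "1 + Phi_n us * (exp b - 1) > 0" using Phi_pos[of us] e1 by (simp add: add_pos_pos)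
  have "exp (b - ds) = 1 + Phi_n us * (exp b - 1)" unfolding ds_def using pos1 by simp
  hence qds: "qfun b ds = Phi_n us" unfolding qfun_def using e1 by simp
  have Pus: "0 < Phi_n us" "Phi_n us < 1/2" using Phi_pos[of us] Phi_strict[OF us0] Phi_0 by auto
  have ds_in: "ds \<in> {delta_th b<..<b}"
    using Pus qds q_pos_iff[OF b0, of ds] q_half_iff(1)[OF b0, of ds] by simp
  have pids: "Phi_inv (qfun b ds) = us" using qds Phi_inv_Phi by simp
  have pt: "Phi_n (Phi_inv (qfun b d)) = qfun b d \<and> Phi_inv (qfun b d) \<le> 0"
    if "d \<in> {delta_th b..<b}" for d
    using that q_pos_iff[OF b0, of d] q_half_iff(2)[OF b0, of d] Phi_Phi_inv[of "qfun b d"] by auto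
  have Geq: "Gvarphi N \<sigma> b d = C * ff \<sigma> (Phi_inv (qfun b d))"
    if "d \<in> {delta_th b..<b}" for d
    using Gvarphi_eq[OF b0 conjunct1[OF pt[OF that]], of N \<sigma>] pt[OF that]
    unfolding C_def ff_def by simp
  have equ: "\<sigma> / phi_n (Phi_inv (qfun b d)) * ((exp b - exp (b - d)) / (exp b - 1)) = 1
      \<longleftrightarrow> rr \<sigma> (Phi_inv (qfun b d)) = 0"
    if "d \<in> {delta_th b..<b}" for d
    unfolding one_minus_q[OF b0] by (rule eq_iff) (rule conjunct1[OF pt[OF that]])
  have ds_in': "ds \<in> {delta_th b..<b}" using ds_in by auto
  have E1: "\<sigma> / phi_n (Phi_inv (qfun b ds)) * ((exp b - exp (b - ds)) / (exp b - 1)) = 1"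
    by (subst equ[OF ds_in']) (simp add: pids rus)
  have E2: "\<forall>d'. d' \<in> {delta_th b<..<b}
            \<and> \<sigma> / phi_n (Phi_inv (qfun b d')) * ((exp b - exp (b - d')) / (exp b - 1)) = 1
            \<longrightarrow> d' = ds"
  proof (intro allI impI)
    fix d' assume h: "d' \<in> {delta_th b<..<b}
            \<and> \<sigma> / phi_n (Phi_inv (qfun b d')) * ((exp b - exp (b - d')) / (exp b - 1)) = 1"
    hence d'in: "d' \<in> {delta_th b..<b}" by auto
    have "rr \<sigma> (Phi_inv (qfun b d')) = 0" using conjunct2[OF h] equ[OF d'in] by (simp only:)
    hence "Phi_inv (qfun b d') = us" using runiq pt[OF d'in] by blast
    hence "qfun b d' = qfun b ds" using pt[OF d'in] qds by metis
    thus "d' = ds" by (rule q_inj[OF b0])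
  qed
  have Gless: "Gvarphi N \<sigma> b y < Gvarphi N \<sigma> b ds" if "y \<in> {delta_th b..<b}" "y \<noteq> ds" for y
  proof -
    have "Phi_inv (qfun b y) \<noteq> us"
    proof
      assume "Phi_inv (qfun b y) = us"
      hence "qfun b y = qfun b ds" using pt[OF that(1)] qds by metis
      thus False using q_inj[OF b0] that(2) by blast
    qed
    hence "ff \<sigma> (Phi_inv (qfun b y)) < ff \<sigma> us" using fmax pt[OF that(1)] by blast
    thus ?thesis unfolding Geq[OF that(1)] Geq[OF ds_in'] pids using C0 by simp
  qed
  have E3: "unique_maximizer_on (Gvarphi N \<sigma> b) {delta_th b..<b} ds"
    unfolding unique_maximizer_on_def using ds_in' Gless by blast
  have E4: "unique_maximizer_on (Gobj N \<sigma> b \<beta>) {0<..<b} ds"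
    if hb: "delta_th b < \<delta>\<^sub>\<beta>" "\<delta>\<^sub>\<beta> < ds"
  proof -
    have bin: "\<delta>\<^sub>\<beta> \<in> {delta_th b..<b}" using hb assms(5) by auto
    have "qfun b ds < qfun b \<delta>\<^sub>\<beta>" by (rule q_mono[OF b0 hb(2)])
    hence "Phi_n (Phi_inv (qfun b ds)) < Phi_n (Phi_inv (qfun b \<delta>\<^sub>\<beta>))"
      using pt[OF ds_in'] pt[OF bin] by simp
    hence ul: "Phi_inv (qfun b ds) \<le> Phi_inv (qfun b \<delta>\<^sub>\<beta>)" using Phi_le_iff by (meson less_le_not_le)
    have "\<sigma> * Phi_inv (qfun b ds) - ds - \<sigma>\<^sup>2 / 2 \<le> \<sigma> * Phi_inv (qfun b \<delta>\<^sub>\<beta>) - \<delta>\<^sub>\<beta> - \<sigma>\<^sup>2 / 2"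
      using ul hb(2) s0 mult_left_mono[OF ul, of \<sigma>] by linarith
    hence "varphi N \<sigma> b ds \<le> varphi N \<sigma> b \<delta>\<^sub>\<beta>"
      unfolding varphi_def using N0 by simp
    hence Fds: "Fstar N \<sigma> b \<beta> ds = varphi N \<sigma> b ds"
      unfolding Fstar_def using assms(6) by simp
    have Gds: "Gobj N \<sigma> b \<beta> ds = Gvarphi N \<sigma> b ds"
      unfolding Gobj_def Fds Gvarphi_def ..
    have ds0: "ds \<in> {0<..<b}" using ds_in hb assms(5) by auto
    have "Gobj N \<sigma> b \<beta> y < Gobj N \<sigma> b \<beta> ds" if y: "y \<in> {0<..<b}" "y \<noteq> ds" for y
    proof -
      have ey: "exp y - 1 > 0" using y by simp
      have g1: "Gobj N \<sigma> b \<beta> y \<le> Gvarphi N \<sigma> b y"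
        unfolding Gobj_def Gvarphi_def Fstar_def using ey by (intro mult_right_mono) auto
      have g2: "Gobj N \<sigma> b \<beta> y \<le> \<beta> * N * (exp y - 1)"
        unfolding Gobj_def Fstar_def using ey by (intro mult_right_mono) auto
      show ?thesis
      proof (cases "y \<le> \<delta>\<^sub>\<beta>")
        case True
        have "\<beta> * N * (exp y - 1) \<le> \<beta> * N * (exp \<delta>\<^sub>\<beta> - 1)"
          using True be0 N0 by (intro mult_left_mono) auto
        also have "\<dots> = Gvarphi N \<sigma> b \<delta>\<^sub>\<beta>" unfolding Gvarphi_def assms(6) ..
        also have "\<dots> < Gvarphi N \<sigma> b ds" using Gless[OF bin] hb(2) by simp
        finally show ?thesis using g2 Gds by simp
      next
        case False
        hence "y \<in> {delta_th b..<b}" using y hb by auto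
        hence "Gvarphi N \<sigma> b y < Gvarphi N \<sigma> b ds" using Gless y(2) by blast
        thus ?thesis using g1 Gds by simp
      qed
    qed
    thus ?thesis unfolding unique_maximizer_on_def using ds0 by blast
  qed
  show ?thesis using ds_in E1 E2 E3 E4 by blast
qed

end
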